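(* Let $F:[n]^\ell\to\mathbb{R}$ be permutation-invariant. For every $i\in\{1,\dots,\ell\}$, $$\mathbb{E}_{X\in[n]^i}[f_{i,F}(X)^2]=\frac{\eta_i}{\binom{\ell}{i}},$$ and this identity is derivable in degree $2$ sum-of-squares from the permutation-invariance axioms $\{F(x_1,\dots,x_\ell)=F(x_{\pi(1)},\dots,x_{\pi(\ell)})\}$, treating the values $F(X)$ as indeterminates.
   Context: $[n]=\mathbb{Z}/n\mathbb{Z}$, $\chi_T(x)=\prod_j e^{2\pi iT_jx_j/n}$, $\hat F(T)=\mathbb{E}_Y[F(Y)\overline{\chi_T(Y)}]$, $|T|=|\{j:T_j\ne0\}|$. $F_i=\sum_{T:|T|=i}\hat F(T)\chi_T$ and $\eta_i=\mathbb{E}_X[F_i(X)^2]$. $f_{i,F}:[n]^i\to\mathbb{C}$ is $f_{i,F}(x_1,\dots,x_i)=\sum_{(T_1,\dots,T_i)\in([n]\setminus\{0\})^i}\hat F(T_1,\dots,T_i,0,\dots,0)\chi_{T_1,\dots,T_i}(x_1,\dots,x_i)$. $F$ is permutation-invariant if invariant under permuting its $\ell$ coordinates. *)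

theory Defs
  imports "HOL-Analysis.Analysis" "HOL-Combinatorics.Permutations"
begin

definition cube :: "nat \<Rightarrow> nat \<Rightarrow> (nat \<Rightarrow> nat) set" where
  "cube n m = ({..<m} \<rightarrow>\<^sub>E {..<n})"

definition chi :: "nat \<Rightarrow> nat \<Rightarrow> (nat \<Rightarrow> nat) \<Rightarrow> (nat \<Rightarrow> nat) \<Rightarrow> complex" where
  "chi n m T x = (\<Prod>j<m. cis (2 * pi * real (T j) * real (x j) / real n))"

definition fourier :: "nat \<Rightarrow> nat \<Rightarrow> ((nat \<Rightarrow> nat) \<Rightarrow> real) \<Rightarrow> (nat \<Rightarrow> nat) \<Rightarrow> complex" where
  "fourier n l F T = (\<Sum>Y\<in>cube n l. complex_of_real (F Y) * cnj (chi n l T Y)) / of_nat (n ^ l)"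

definition wt :: "nat \<Rightarrow> (nat \<Rightarrow> nat) \<Rightarrow> nat" where
  "wt l T = card {j. j < l \<and> T j \<noteq> 0}"

definition level :: "nat \<Rightarrow> nat \<Rightarrow> ((nat \<Rightarrow> nat) \<Rightarrow> real) \<Rightarrow> nat \<Rightarrow> (nat \<Rightarrow> nat) \<Rightarrow> complex" where
  "level n l F i x = (\<Sum>T\<in>{T\<in>cube n l. wt l T = i}. fourier n l F T * chi n l T x)"

definition eta :: "nat \<Rightarrow> nat \<Rightarrow> ((nat \<Rightarrow> nat) \<Rightarrow> real) \<Rightarrow> nat \<Rightarrow> complex" where
  "eta n l F i = (\<Sum>X\<in>cube n l. (level n l F i X)^2) / of_nat (n ^ l)"

definition pad :: "nat \<Rightarrow> nat \<Rightarrow> (nat \<Rightarrow> nat) \<Rightarrow> (nat \<Rightarrow> nat)" where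
  "pad l i T = (\<lambda>j. if j < i then T j else if j < l then 0 else undefined)"

definition fpart :: "nat \<Rightarrow> nat \<Rightarrow> ((nat \<Rightarrow> nat) \<Rightarrow> real) \<Rightarrow> nat \<Rightarrow> (nat \<Rightarrow> nat) \<Rightarrow> complex" where
  "fpart n l F i x = (\<Sum>T\<in>({..<i} \<rightarrow>\<^sub>E {1..<n}). fourier n l F (pad l i T) * chi n i T x)"

definition perm_invariant :: "nat \<Rightarrow> nat \<Rightarrow> ((nat \<Rightarrow> nat) \<Rightarrow> real) \<Rightarrow> bool" where
  "perm_invariant n l F \<longleftrightarrow> (\<forall>x\<in>cube n l. \<forall>\<pi>. \<pi> permutes {..<l} \<longrightarrow> F x = F (x \<circ> \<pi>))"

definition discrepancy :: "nat \<Rightarrow> nat \<Rightarrow> ((nat \<Rightarrow> nat) \<Rightarrow> real) \<Rightarrow> nat \<Rightarrow> complex" where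
  "discrepancy n l F i =
     (\<Sum>X\<in>cube n i. (fpart n l F i X)^2) / of_nat (n ^ i) - eta n l F i / of_nat (l choose i)"

end

theory Submission
  imports Defs
begin


lemma char_sum:
  assumes n: "0 < n"
  shows "(\<Sum>x<n. cis (2 * pi * real k * real x / real n)) = (if n dvd k then of_nat n else 0)"
proof (cases "n dvd k")
  case True
  then obtain m where k: "k = n * m" by auto
  have "cis (2 * pi * real k * real x / real n) = 1" for x
  proof -
    have "2 * pi * real k * real x / real n = 2 * pi * of_nat (m * x)" using n by (simp add: k field_simps)
    then show ?thesis by (metis cis_multiple_2pi Ints_of_nat)
  qed
  then show ?thesis using True by simp
next
  case False
  define w where "w = cis (2 * pi * real k / real n)"
  have w1: "w \<noteq> 1"
  proof
    assume "w = 1"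
    then have "cos (2 * pi * real k / real n) = 1" by (auto simp: w_def complex_eq_iff)
    then obtain j :: int where "2 * pi * real k / real n = j * 2 * pi" by (auto simp: cos_one_2pi_int)
    then have "real k = real n * j" using n by (simp add: field_simps)
    then have "int k = int n * j" by (metis of_int_eq_iff of_int_mult of_int_of_nat_eq)
    then have "int n dvd int k" by auto
    then show False using False by simp
  qed
  have "(\<Sum>x<n. cis (2 * pi * real k * real x / real n)) = (\<Sum>x<n. w ^ x)"
  proof (intro sum.cong refl)
    fix x assume "x \<in> {..<n}"
    have "w ^ x = cis (real x * (2 * pi * real k / real n))" unfolding w_def by (rule Complex.DeMoivre)
    also have "\<dots> = cis (2 * pi * real k * real x / real n)" by (rule arg_cong[where f=cis]) (simp add: field_simps)
    finally show "cis (2 * pi * real k * real x / real n) = w ^ x" by simp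
  qed
  also have "\<dots> = (w ^ n - 1) / (w - 1)" using w1 by (subst geometric_sum) auto
  also have "w ^ n = 1"
  proof -
    have "w ^ n = cis (real n * (2 * pi * real k / real n))" unfolding w_def by (rule Complex.DeMoivre)
    moreover have "real n * (2 * pi * real k / real n) = 2 * pi * real k" using n by simp
    ultimately have "w ^ n = cis (2 * pi * real k)" by simp
    also have "\<dots> = 1" by (metis cis_multiple_2pi Ints_of_nat)
    finally show ?thesis .
  qed
  finally show ?thesis using False by simp
qed

lemma chi_mult:
  "chi n m T X * chi n m S X = (\<Prod>j<m. cis (2 * pi * real (T j + S j) * real (X j) / real n))"
  unfolding chi_def prod.distrib[symmetric]
  by (intro prod.cong refl) (simp add: cis_mult add_divide_distrib algebra_simps)

lemma orth:
  assumes n: "0 < n"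
  shows "(\<Sum>X\<in>cube n m. chi n m T X * chi n m S X) = (if \<forall>j<m. n dvd (T j + S j) then of_nat (n ^ m) else 0)"
proof -
  have "(\<Sum>X\<in>cube n m. chi n m T X * chi n m S X)
      = (\<Sum>X\<in>PiE {..<m} (\<lambda>_. {..<n}). \<Prod>j<m. cis (2 * pi * real (T j + S j) * real (X j) / real n))"
    by (simp add: chi_mult cube_def)
  also have "\<dots> = (\<Prod>j<m. \<Sum>x<n. cis (2 * pi * real (T j + S j) * real x / real n))"
    by (rule prod_sum_PiE[symmetric]) auto
  also have "\<dots> = (\<Prod>j<m. (if n dvd (T j + S j) then of_nat n else 0))"
    using n by (intro prod.cong refl char_sum)
  also have "\<dots> = (if \<forall>j<m. n dvd (T j + S j) then of_nat (n ^ m) else 0)"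
    by (auto simp: prod_zero_iff)
  finally show ?thesis .
qed


lemma cis_neg_factor:
  assumes n: "0 < n" and d: "n dvd (t + s)"
  shows "cis (2 * pi * real s * real x / real n) = cnj (cis (2 * pi * real t * real x / real n))"
proof -
  obtain m where m: "t + s = n * m" using d by auto
  have hs: "real s = real n * real m - real t" using m by (metis add_diff_cancel_left' of_nat_add of_nat_mult add.commute diff_add_cancel)
  have "2 * pi * real s * real x / real n = 2 * pi * (real n * real m - real t) * real x / real n" by (simp add: hs)
  also have "\<dots> = 2 * pi * of_nat (m * x) + (- (2 * pi * real t * real x / real n))"
    using n by (simp add: field_simps)
  finally have eq: "2 * pi * real s * real x / real n = 2 * pi * of_nat (m * x) + (- (2 * pi * real t * real x / real n))" .
  have "cis (2 * pi * real s * real x / real n) = cis (2 * pi * of_nat (m * x) + (- (2 * pi * real t * real x / real n)))"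
    by (simp only: eq)
  also have "\<dots> = cis (2 * pi * of_nat (m * x)) * cis (- (2 * pi * real t * real x / real n))"
    by (rule cis_mult[symmetric])
  also have "cis (2 * pi * of_nat (m * x)) = 1" by (metis cis_multiple_2pi Ints_of_nat)
  finally show ?thesis by (simp add: cis_cnj)
qed

lemma chi_cnj:
  assumes n: "0 < n" and d: "\<forall>j<m. n dvd (T j + S j)"
  shows "chi n m S X = cnj (chi n m T X)"
  unfolding chi_def cnj_prod using d n by (intro prod.cong refl cis_neg_factor) auto

lemma square_sum_expand:
  fixes a :: "'b \<Rightarrow> 'c :: comm_ring_1"
  assumes "finite A" "finite B"
  shows "(\<Sum>X\<in>B. (\<Sum>T\<in>A. a T * c T X)^2) = (\<Sum>T\<in>A. \<Sum>S\<in>A. a T * a S * (\<Sum>X\<in>B. c T X * c S X))"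
proof -
  have "(\<Sum>X\<in>B. (\<Sum>T\<in>A. a T * c T X)^2) = (\<Sum>X\<in>B. \<Sum>T\<in>A. \<Sum>S\<in>A. a T * a S * (c T X * c S X))"
    by (intro sum.cong refl) (simp add: power2_eq_square sum_product mult_ac)
  also have "\<dots> = (\<Sum>T\<in>A. \<Sum>X\<in>B. \<Sum>S\<in>A. a T * a S * (c T X * c S X))"
    by (rule sum.swap)
  also have "\<dots> = (\<Sum>T\<in>A. \<Sum>S\<in>A. \<Sum>X\<in>B. a T * a S * (c T X * c S X))"
    by (intro sum.cong refl sum.swap)
  also have "\<dots> = (\<Sum>T\<in>A. \<Sum>S\<in>A. a T * a S * (\<Sum>X\<in>B. c T X * c S X))"
    by (simp add: sum_distrib_left)
  finally show ?thesis .
qed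

lemma parseval:
  assumes n: "0 < n" and fA: "finite A"
    and nuA: "\<And>T. T \<in> A \<Longrightarrow> nu T \<in> A"
    and nuc: "\<And>T S. T \<in> A \<Longrightarrow> S \<in> A \<Longrightarrow> (\<forall>j<m. n dvd (T j + S j)) \<longleftrightarrow> S = nu T"
  shows "(\<Sum>X\<in>cube n m. (\<Sum>T\<in>A. a T * chi n m T X)^2) = of_nat (n ^ m) * (\<Sum>T\<in>A. a T * a (nu T))"
proof -
  have fc: "finite (cube n m)" by (simp add: cube_def finite_PiE)
  have "(\<Sum>X\<in>cube n m. (\<Sum>T\<in>A. a T * chi n m T X)^2)
     = (\<Sum>T\<in>A. \<Sum>S\<in>A. a T * a S * (\<Sum>X\<in>cube n m. chi n m T X * chi n m S X))"
    by (rule square_sum_expand[OF fA fc])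
  also have "\<dots> = (\<Sum>T\<in>A. \<Sum>S\<in>A. a T * a S * (if S = nu T then of_nat (n ^ m) else 0))"
    by (intro sum.cong refl) (simp add: orth[OF n] nuc)
  also have "\<dots> = (\<Sum>T\<in>A. a T * a (nu T) * of_nat (n ^ m))"
    by (intro sum.cong refl) (simp add: if_distrib[where f="\<lambda>z. _ * z"] sum.delta[OF fA] nuA cong: if_cong)
  finally show ?thesis by (simp add: sum_distrib_left mult_ac)
qed


definition nui :: "nat \<Rightarrow> nat \<Rightarrow> (nat \<Rightarrow> nat) \<Rightarrow> (nat \<Rightarrow> nat)" where
  "nui n i T = (\<lambda>j. if j < i then n - T j else undefined)"

definition nul :: "nat \<Rightarrow> nat \<Rightarrow> (nat \<Rightarrow> nat) \<Rightarrow> (nat \<Rightarrow> nat)" where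
  "nul n l T = (\<lambda>j. if j < l then (n - T j) mod n else undefined)"

lemma dvd_neg_mod: "(t::nat) < n \<Longrightarrow> n dvd (t + (n - t) mod n)"
  by (cases "t = 0") auto

lemma dvd_iff_neg_mod:
  assumes "(t::nat) < n" "s < n"
  shows "n dvd (t + s) \<longleftrightarrow> s = (n - t) mod n"
proof
  assume d: "n dvd (t + s)"
  then obtain q where q: "t + s = n * q" by auto
  show "s = (n - t) mod n"
  proof (cases "q = 0")
    case True then show ?thesis using q by simp
  next
    case False
    have "q < 2" using q assms by (metis add_less_mono mult_2_right mult_less_cancel1 not_less not_less_zero less_le_trans mult.commute zero_less_iff_neq_zero)
    then have "q = 1" using False by simp
    then show ?thesis using q assms by (cases "t = 0") auto
  qed
next
  assume "s = (n - t) mod n" then show "n dvd (t + s)" using dvd_neg_mod assms by simp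
qed

lemma dvd_iff_neg:
  assumes "(t::nat) \<in> {1..<n}" "s \<in> {1..<n}"
  shows "n dvd (t + s) \<longleftrightarrow> s = n - t"
  using dvd_iff_neg_mod[of t n s] assms by auto

lemma nui_in: "T \<in> {..<i} \<rightarrow>\<^sub>E {1..<n} \<Longrightarrow> nui n i T \<in> {..<i} \<rightarrow>\<^sub>E {1..<n}"
  by (auto simp: nui_def PiE_def Pi_def extensional_def)

lemma nui_nui: "T \<in> {..<i} \<rightarrow>\<^sub>E {1..<n} \<Longrightarrow> nui n i (nui n i T) = T"
  by (auto simp: nui_def PiE_def Pi_def extensional_def fun_eq_iff)

lemma nui_cond:
  assumes "T \<in> {..<i} \<rightarrow>\<^sub>E {1..<n}" "S \<in> {..<i} \<rightarrow>\<^sub>E {1..<n}"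
  shows "(\<forall>j<i. n dvd (T j + S j)) \<longleftrightarrow> S = nui n i T"
proof -
  have "(\<forall>j<i. n dvd (T j + S j)) \<longleftrightarrow> (\<forall>j<i. S j = n - T j)"
    using assms dvd_iff_neg by (auto simp: PiE_def Pi_def)
  also have "\<dots> \<longleftrightarrow> S = nui n i T"
    using assms by (auto simp: nui_def PiE_def extensional_def fun_eq_iff)
  finally show ?thesis .
qed

lemma nul_cube: "0 < n \<Longrightarrow> T \<in> cube n l \<Longrightarrow> nul n l T \<in> cube n l"
  by (auto simp: nul_def cube_def PiE_def Pi_def extensional_def)

lemma nul_nul: "0 < n \<Longrightarrow> T \<in> cube n l \<Longrightarrow> nul n l (nul n l T) = T"
proof -
  assume n: "0 < n" and T: "T \<in> cube n l"
  have "(n - (n - t) mod n) mod n = t" if "t < n" for t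
    using that by (cases "t = 0") auto
  then show ?thesis using T by (auto simp: nul_def cube_def PiE_def Pi_def extensional_def fun_eq_iff)
qed

lemma nul_supp: "0 < n \<Longrightarrow> T \<in> cube n l \<Longrightarrow> {j. j < l \<and> nul n l T j \<noteq> 0} = {j. j < l \<and> T j \<noteq> 0}"
proof -
  assume n: "0 < n" and T: "T \<in> cube n l"
  have "(n - t) mod n \<noteq> 0 \<longleftrightarrow> t \<noteq> 0" if "t < n" for t
    using that by (cases "t = 0") auto
  then show ?thesis using T by (auto simp: nul_def cube_def PiE_def Pi_def)
qed

lemma nul_cond:
  assumes "T \<in> cube n l" "S \<in> cube n l"
  shows "(\<forall>j<l. n dvd (T j + S j)) \<longleftrightarrow> S = nul n l T"
proof -
  have "(\<forall>j<l. n dvd (T j + S j)) \<longleftrightarrow> (\<forall>j<l. S j = (n - T j) mod n)"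
    using assms dvd_iff_neg_mod by (auto simp: cube_def PiE_def Pi_def)
  also have "\<dots> \<longleftrightarrow> S = nul n l T"
    using assms by (auto simp: nul_def cube_def PiE_def extensional_def fun_eq_iff)
  finally show ?thesis .
qed

lemma nul_dvd: "T \<in> cube n l \<Longrightarrow> \<forall>j<l. n dvd (T j + nul n l T j)"
  by (auto simp: nul_def cube_def PiE_def Pi_def intro: dvd_neg_mod)

lemma pad_nui:
  assumes "T \<in> {..<i} \<rightarrow>\<^sub>E {1..<n}" "i \<le> l"
  shows "pad l i (nui n i T) = nul n l (pad l i T)"
  using assms by (auto simp: pad_def nui_def nul_def PiE_def Pi_def fun_eq_iff)

lemma pad_cube:
  assumes "0 < n" "T \<in> {..<i} \<rightarrow>\<^sub>E {1..<n}" "i \<le> l"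
  shows "pad l i T \<in> cube n l"
  using assms by (auto simp: pad_def cube_def PiE_def Pi_def extensional_def)

lemma fourier_cnj:
  assumes n: "0 < n" and T: "T \<in> cube n l"
  shows "fourier n l F (nul n l T) = cnj (fourier n l F T)"
proof -
  have "chi n l (nul n l T) Y = cnj (chi n l T Y)" for Y
    by (rule chi_cnj[OF n nul_dvd[OF T]])
  then show ?thesis by (simp add: fourier_def cnj_sum)
qed

lemma cube_comp:
  assumes "Y \<in> cube n l" "p permutes {..<l}"
  shows "Y \<circ> p \<in> cube n l"
  using assms permutes_in_image[OF assms(2)] by (auto simp: cube_def PiE_def Pi_def extensional_def permutes_in_image permutes_not_in)

lemma chi_comp:
  assumes "p permutes {..<l}"
  shows "chi n l (S \<circ> p) (Y \<circ> p) = chi n l S Y"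
  unfolding chi_def using prod.permute[OF assms, of "\<lambda>j. cis (2 * pi * real (S j) * real (Y j) / real n)"]
  by (simp add: o_def)

lemma fourier_comp:
  assumes p: "p permutes {..<l}" and F: "perm_invariant n l F"
  shows "fourier n l F (S \<circ> p) = fourier n l F S"
proof -
  have "(\<Sum>Y\<in>cube n l. complex_of_real (F Y) * cnj (chi n l (S \<circ> p) Y))
      = (\<Sum>Y\<in>cube n l. complex_of_real (F Y) * cnj (chi n l S Y))"
  proof (rule sum.reindex_bij_witness[where i="\<lambda>Y. Y \<circ> p" and j="\<lambda>Y. Y \<circ> inv p"])
    fix Y assume Y: "Y \<in> cube n l"
    show "Y \<circ> p \<circ> inv p = Y" by (simp add: o_assoc[symmetric] permutes_inv_o[OF p])
    show "Y \<circ> p \<in> cube n l" by (rule cube_comp[OF Y p])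
    show "Y \<circ> inv p \<circ> p = Y" by (simp add: o_assoc[symmetric] permutes_inv_o[OF p])
    show "Y \<circ> inv p \<in> cube n l" by (rule cube_comp[OF Y permutes_inv[OF p]])
    have c: "chi n l (S \<circ> p) Y = chi n l S (Y \<circ> inv p)"
      using chi_comp[OF p, of n S "Y \<circ> inv p"] by (simp add: o_assoc[symmetric] permutes_inv_o[OF p])
    have f: "F (Y \<circ> inv p) = F Y" using F Y permutes_inv[OF p] by (simp add: perm_invariant_def)
    show "complex_of_real (F (Y \<circ> inv p)) * cnj (chi n l S (Y \<circ> inv p)) = complex_of_real (F Y) * cnj (chi n l (S \<circ> p) Y)"
      by (simp add: c f)
  qed
  then show ?thesis by (simp add: fourier_def)
qed

lemma nul_comp:
  assumes p: "p permutes {..<l}"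
  shows "nul n l (T \<circ> p) = nul n l T \<circ> p"
  using p permutes_in_image[OF p] by (auto simp: nul_def fun_eq_iff permutes_not_in)


lemma chi_nui: "0 < n \<Longrightarrow> T \<in> {..<i} \<rightarrow>\<^sub>E {1..<n} \<Longrightarrow> chi n i (nui n i T) X = cnj (chi n i T X)"
  by (rule chi_cnj) (auto simp: nui_def PiE_def Pi_def)

lemma sum_invol:
  assumes "\<And>x. x \<in> A \<Longrightarrow> f x \<in> A" "\<And>x. x \<in> A \<Longrightarrow> f (f x) = x"
  shows "(\<Sum>x\<in>A. g (f x)) = (\<Sum>x\<in>A. g x)"
  by (rule sum.reindex_bij_witness[where i=f and j=f]) (use assms in auto)

lemma fpart_real:
  assumes n: "0 < n" and il: "i \<le> l"
  shows "cnj (fpart n l F i X) = fpart n l F i X"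
proof -
  let ?P = "{..<i} \<rightarrow>\<^sub>E {1..<n}"
  have "cnj (fpart n l F i X) = (\<Sum>T\<in>?P. fourier n l F (pad l i (nui n i T)) * chi n i (nui n i T) X)"
    unfolding fpart_def cnj_sum
  proof (rule sum.cong[OF refl])
    fix T assume T: "T \<in> ?P"
    have "cnj (fourier n l F (pad l i T)) = fourier n l F (nul n l (pad l i T))"
      by (rule fourier_cnj[OF n pad_cube[OF n T il], symmetric])
    also have "nul n l (pad l i T) = pad l i (nui n i T)" by (rule pad_nui[OF T il, symmetric])
    finally have 1: "cnj (fourier n l F (pad l i T)) = fourier n l F (pad l i (nui n i T))" .
    have 2: "cnj (chi n i T X) = chi n i (nui n i T) X" by (rule chi_nui[OF n T, symmetric])
    show "cnj (fourier n l F (pad l i T) * chi n i T X) = fourier n l F (pad l i (nui n i T)) * chi n i (nui n i T) X"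
      by (simp only: complex_cnj_mult 1 2)
  qed
  also have "\<dots> = fpart n l F i X"
    unfolding fpart_def
    by (rule sum_invol[where f="nui n i" and g="\<lambda>T. fourier n l F (pad l i T) * chi n i T X", OF nui_in nui_nui])
  finally show ?thesis .
qed

lemma wt_nul: "0 < n \<Longrightarrow> T \<in> cube n l \<Longrightarrow> wt l (nul n l T) = wt l T"
  unfolding wt_def by (simp only: nul_supp)

lemma level_real:
  assumes n: "0 < n"
  shows "cnj (level n l F i X) = level n l F i X"
proof -
  let ?A = "{T\<in>cube n l. wt l T = i}"
  have "cnj (level n l F i X) = (\<Sum>T\<in>?A. fourier n l F (nul n l T) * chi n l (nul n l T) X)"
    unfolding level_def cnj_sum
  proof (rule sum.cong[OF refl])
    fix T assume "T \<in> ?A"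
    then have T: "T \<in> cube n l" by simp
    have 1: "cnj (fourier n l F T) = fourier n l F (nul n l T)" by (rule fourier_cnj[OF n T, symmetric])
    have 2: "cnj (chi n l T X) = chi n l (nul n l T) X" by (rule chi_cnj[OF n nul_dvd[OF T], symmetric])
    show "cnj (fourier n l F T * chi n l T X) = fourier n l F (nul n l T) * chi n l (nul n l T) X"
      by (simp only: complex_cnj_mult 1 2)
  qed
  also have "\<dots> = level n l F i X"
    unfolding level_def
  proof (rule sum_invol[where f="nul n l" and g="\<lambda>T. fourier n l F T * chi n l T X"])
    fix T assume "T \<in> ?A"
    then have T: "T \<in> cube n l" and w: "wt l T = i" by auto
    show "nul n l T \<in> ?A" using nul_cube[OF n T] wt_nul[OF n T] w by simp
    show "nul n l (nul n l T) = T" by (rule nul_nul[OF n T])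
  qed
  finally show ?thesis .
qed

lemma perm_exists:
  assumes S: "S \<subseteq> {..<l}" "card S = i"
  shows "\<exists>p. p permutes {..<l} \<and> (\<forall>j<l. p j \<in> S \<longleftrightarrow> j < i)"
proof -
  have fS: "finite S" using S finite_subset by blast
  have il: "i \<le> l" using S card_mono[of "{..<l}" S] by auto
  obtain f where f: "bij_betw f {..<i} S" using finite_same_card_bij[of "{..<i}" S] fS S by auto
  have "card ({..<l} - S) = l - i" using S fS by (simp add: card_Diff_subset)
  then obtain h where h: "bij_betw h {i..<l} ({..<l} - S)"
    using finite_same_card_bij[of "{i..<l}" "{..<l} - S"] by auto
  define p where "p j = (if j < i then f j else if j < l then h j else j)" for j
  have b1: "bij_betw p {..<i} S" using f by (rule bij_betw_cong[THEN iffD1, rotated]) (auto simp: p_def)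
  have b2: "bij_betw p {i..<l} ({..<l} - S)" using h by (rule bij_betw_cong[THEN iffD1, rotated]) (auto simp: p_def)
  have "bij_betw p ({..<i} \<union> {i..<l}) (S \<union> ({..<l} - S))" by (rule bij_betw_combine[OF b1 b2]) auto
  moreover have "{..<i} \<union> {i..<l} = {..<l}" using il by auto
  moreover have "S \<union> ({..<l} - S) = {..<l}" using S by auto
  ultimately have "bij_betw p {..<l} {..<l}" by simp
  then have "p permutes {..<l}" by (rule bij_imp_permutes) (use il in \<open>auto simp: p_def\<close>)
  moreover have "\<forall>j<l. p j \<in> S \<longleftrightarrow> j < i"
  proof (intro allI impI)
    fix j assume j: "j < l"
    show "p j \<in> S \<longleftrightarrow> j < i"
    proof (cases "j < i")
      case True then show ?thesis using b1 by (auto simp: bij_betw_def)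
    next
      case False
      then have "p j \<in> {..<l} - S" using b2 j by (auto simp: bij_betw_def)
      then show ?thesis using False by auto
    qed
  qed
  ultimately show ?thesis by blast
qed

definition supp :: "nat \<Rightarrow> (nat \<Rightarrow> nat) \<Rightarrow> nat set" where
  "supp l T = {j. j < l \<and> T j \<noteq> 0}"

lemma sum_supp_perm:
  assumes S: "S \<subseteq> {..<l}" "card S = i"
    and g: "\<And>T p. T \<in> cube n l \<Longrightarrow> p permutes {..<l} \<Longrightarrow> g (T \<circ> p) = g T"
  shows "(\<Sum>T\<in>{T\<in>cube n l. supp l T = S}. g T) = (\<Sum>T\<in>{T\<in>cube n l. supp l T = {..<i}}. g T)"
proof -
  have il: "i \<le> l" using S card_mono[of "{..<l}" S] by auto
  obtain p where p: "p permutes {..<l}" and pS: "\<And>j. j < l \<Longrightarrow> p j \<in> S \<longleftrightarrow> j < i"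
    using perm_exists[OF S] by blast
  show ?thesis
  proof (rule sum.reindex_bij_witness[where i="\<lambda>U. U \<circ> inv p" and j="\<lambda>T. T \<circ> p"])
    fix T assume T: "T \<in> {T\<in>cube n l. supp l T = S}"
    show "T \<circ> p \<circ> inv p = T" by (simp add: o_assoc[symmetric] permutes_inv_o[OF p])
    have "supp l (T \<circ> p) = {..<i}"
    proof -
      have "j < l \<Longrightarrow> T (p j) \<noteq> 0 \<longleftrightarrow> p j \<in> S" for j
        using T permutes_in_image[OF p, of j] by (auto simp: supp_def)
      then show ?thesis using pS il by (auto simp: supp_def)
    qed
    then show "T \<circ> p \<in> {T\<in>cube n l. supp l T = {..<i}}" using T cube_comp[OF _ p] by auto
    show "g (T \<circ> p) = g T" using T g p by auto
  next
    fix U assume U: "U \<in> {T\<in>cube n l. supp l T = {..<i}}"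
    show "U \<circ> inv p \<circ> p = U" by (simp add: o_assoc[symmetric] permutes_inv_o[OF p])
    have "supp l (U \<circ> inv p) = S"
    proof -
      have "j < l \<Longrightarrow> U (inv p j) \<noteq> 0 \<longleftrightarrow> j \<in> S" for j
        using U permutes_in_image[OF permutes_inv[OF p], of j] pS[of "inv p j"] permutes_inverses(1)[OF p, of j]
        by (auto simp: supp_def)
      then show ?thesis using S by (auto simp: supp_def)
    qed
    then show "U \<circ> inv p \<in> {T\<in>cube n l. supp l T = S}" using U cube_comp[OF _ permutes_inv[OF p]] by auto
  qed
qed

lemma sum_supp_pad:
  assumes n: "0 < n" and il: "i \<le> l"
  shows "(\<Sum>T\<in>{T\<in>cube n l. supp l T = {..<i}}. g T) = (\<Sum>T\<in>{..<i} \<rightarrow>\<^sub>E {1..<n}. g (pad l i T))"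
proof (rule sum.reindex_bij_witness[where j="\<lambda>T j. if j < i then T j else undefined" and i="pad l i"])
  fix T assume T: "T \<in> {..<i} \<rightarrow>\<^sub>E {1..<n}"
  show "(\<lambda>j. if j < i then pad l i T j else undefined) = T"
    using T by (auto simp: pad_def PiE_def extensional_def fun_eq_iff)
  have "supp l (pad l i T) = {..<i}" using T il by (auto simp: supp_def pad_def PiE_def Pi_def)
  then show "pad l i T \<in> {T\<in>cube n l. supp l T = {..<i}}" using pad_cube[OF n T il] by auto
next
  fix U assume U: "U \<in> {T\<in>cube n l. supp l T = {..<i}}"
  then have U1: "U \<in> cube n l" and U2: "supp l U = {..<i}" by auto
  have Uz: "\<And>j. j < l \<Longrightarrow> U j \<noteq> 0 \<longleftrightarrow> j < i" using U2 il by (auto simp: supp_def)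
  have pU: "pad l i (\<lambda>j. if j < i then U j else undefined) = U"
    using U1 Uz il by (auto simp: pad_def cube_def PiE_def extensional_def fun_eq_iff)
  then show "pad l i (\<lambda>j. if j < i then U j else undefined) = U" .
  show "g (pad l i (\<lambda>j. if j < i then U j else undefined)) = g U" by (simp only: pU)
  have "j < i \<Longrightarrow> U j \<in> {1..<n}" for j
  proof -
    assume j: "j < i"
    then have "j < l" using il by simp
    then have "U j < n" "U j \<noteq> 0" using U1 Uz j by (auto simp: cube_def PiE_def Pi_def)
    then show "U j \<in> {1..<n}" by auto
  qed
  then show "(\<lambda>j. if j < i then U j else undefined) \<in> {..<i} \<rightarrow>\<^sub>E {1..<n}"
    by (auto simp: PiE_def Pi_def extensional_def)
qed

lemma comb:
  assumes n: "0 < n" and il: "i \<le> l"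
    and g: "\<And>T p. T \<in> cube n l \<Longrightarrow> p permutes {..<l} \<Longrightarrow> g (T \<circ> p) = g T"
  shows "(\<Sum>T\<in>{T\<in>cube n l. wt l T = i}. g T) = of_nat (l choose i) * (\<Sum>T\<in>{..<i} \<rightarrow>\<^sub>E {1..<n}. g (pad l i T))"
proof -
  let ?A = "{T\<in>cube n l. wt l T = i}"
  let ?Fam = "{S. S \<subseteq> {..<l} \<and> card S = i}"
  have fc: "finite (cube n l)" by (simp add: cube_def finite_PiE)
  have fA: "finite ?A" using fc by simp
  have fF: "finite ?Fam" by simp
  have im: "supp l ` ?A \<subseteq> ?Fam" by (auto simp: supp_def wt_def)
  have "(\<Sum>T\<in>?A. g T) = (\<Sum>S\<in>?Fam. \<Sum>T\<in>{T. T \<in> ?A \<and> supp l T = S}. g T)"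
    by (rule sum.group[OF fA fF im, symmetric])
  also have "\<dots> = (\<Sum>S\<in>?Fam. \<Sum>T\<in>{T\<in>cube n l. supp l T = {..<i}}. g T)"
  proof (rule sum.cong[OF refl])
    fix S assume S: "S \<in> ?Fam"
    have "{T. T \<in> ?A \<and> supp l T = S} = {T\<in>cube n l. supp l T = S}"
      using S by (auto simp: wt_def supp_def)
    then show "(\<Sum>T\<in>{T. T \<in> ?A \<and> supp l T = S}. g T) = (\<Sum>T\<in>{T\<in>cube n l. supp l T = {..<i}}. g T)"
      using sum_supp_perm[of S l i n g] S g by auto
  qed
  also have "\<dots> = of_nat (card ?Fam) * (\<Sum>T\<in>{T\<in>cube n l. supp l T = {..<i}}. g T)" by simp
  also have "card ?Fam = l choose i" using n_subsets[of "{..<l}" i] by simp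
  also have "(\<Sum>T\<in>{T\<in>cube n l. supp l T = {..<i}}. g T) = (\<Sum>T\<in>{..<i} \<rightarrow>\<^sub>E {1..<n}. g (pad l i T))"
    by (rule sum_supp_pad[OF n il])
  finally show ?thesis .
qed



lemma quad_decomp:
  fixes beta :: "'a \<Rightarrow> 'a \<Rightarrow> 'c::field_char_0" and G H :: "'a \<Rightarrow> 'c"
  assumes fC: "finite C" and fP: "finite P" and Pne: "P \<noteq> {}"
    and act: "\<And>Y p. Y \<in> C \<Longrightarrow> p \<in> P \<Longrightarrow> act Y p \<in> C"
    and Hd: "\<And>Y. H Y = (\<Sum>p\<in>P. G (act Y p)) / of_nat (card P)"
    and Q0: "(\<Sum>Y\<in>C. \<Sum>Z\<in>C. beta Y Z * H Y * H Z) = 0"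
  shows "(\<Sum>Y\<in>C. \<Sum>Z\<in>C. beta Y Z * G Y * G Z)
       = (\<Sum>Y\<in>C. \<Sum>p\<in>P. (\<Sum>W\<in>C. ((beta Y W + (\<Sum>Z\<in>C. \<Sum>s\<in>P. if W = act Z s then beta Z Y else 0) / of_nat (card P)) / of_nat (card P)) * G W) * (G Y - G (act Y p)))"
proof -
  define L where "L = (of_nat (card P) :: 'c)"
  have L0: "L \<noteq> 0" using fP Pne by (simp add: L_def)
  define w where "w Y = (\<Sum>Z\<in>C. beta Y Z * G Z) + (\<Sum>Z\<in>C. beta Z Y * H Z)" for Y
  have "(\<Sum>Y\<in>C. \<Sum>Z\<in>C. beta Y Z * G Y * G Z) = (\<Sum>Y\<in>C. \<Sum>Z\<in>C. beta Y Z * G Y * G Z) - (\<Sum>Y\<in>C. \<Sum>Z\<in>C. beta Y Z * H Y * H Z)"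
    by (simp add: Q0)
  also have "\<dots> = (\<Sum>Y\<in>C. \<Sum>Z\<in>C. beta Y Z * (G Y - H Y) * G Z) + (\<Sum>Y\<in>C. \<Sum>Z\<in>C. beta Y Z * H Y * (G Z - H Z))"
    by (simp add: sum_subtractf[symmetric] sum.distrib[symmetric] algebra_simps)
  also have sw: "(\<Sum>Y\<in>C. \<Sum>Z\<in>C. beta Y Z * H Y * (G Z - H Z)) = (\<Sum>Y\<in>C. \<Sum>Z\<in>C. beta Z Y * H Z * (G Y - H Y))"
    by (rule sum.swap)
  also have "(\<Sum>Y\<in>C. \<Sum>Z\<in>C. beta Y Z * (G Y - H Y) * G Z) + (\<Sum>Y\<in>C. \<Sum>Z\<in>C. beta Z Y * H Z * (G Y - H Y))
      = (\<Sum>Y\<in>C. (G Y - H Y) * w Y)"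
    by (simp add: w_def sum.distrib[symmetric] sum_distrib_left distrib_left algebra_simps)
  also have "\<dots> = (\<Sum>Y\<in>C. \<Sum>p\<in>P. w Y / L * (G Y - G (act Y p)))"
  proof (rule sum.cong[OF refl])
    fix Y assume Y: "Y \<in> C"
    have "G Y - H Y = (\<Sum>p\<in>P. G Y - G (act Y p)) / L"
      using L0 by (simp add: Hd L_def sum_subtractf field_simps)
    then have "(G Y - H Y) * w Y = (\<Sum>p\<in>P. G Y - G (act Y p)) / L * w Y" by simp
    also have "\<dots> = (\<Sum>p\<in>P. (G Y - G (act Y p)) / L * w Y)" by (simp add: sum_divide_distrib sum_distrib_right)
    also have "\<dots> = (\<Sum>p\<in>P. w Y / L * (G Y - G (act Y p)))" by (intro sum.cong refl) (simp add: field_simps)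
    finally show "(G Y - H Y) * w Y = (\<Sum>p\<in>P. w Y / L * (G Y - G (act Y p)))" .
  qed
  also have "\<dots> = (\<Sum>Y\<in>C. \<Sum>p\<in>P. (\<Sum>W\<in>C. ((beta Y W + (\<Sum>Z\<in>C. \<Sum>s\<in>P. if W = act Z s then beta Z Y else 0) / L) / L) * G W) * (G Y - G (act Y p)))"
  proof (intro sum.cong refl)
    fix Y p assume Y: "Y \<in> C"
    have "(\<Sum>Z\<in>C. beta Z Y * H Z) = (\<Sum>Z\<in>C. \<Sum>s\<in>P. beta Z Y * G (act Z s) / L)"
      by (simp add: Hd L_def sum_distrib_left sum_divide_distrib)
    also have "\<dots> = (\<Sum>Z\<in>C. \<Sum>s\<in>P. \<Sum>W\<in>C. (if W = act Z s then beta Z Y else 0) / L * G W)"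
    proof (intro sum.cong refl)
      fix Z s assume "Z \<in> C" "s \<in> P"
      then have "act Z s \<in> C" by (rule act)
      then show "beta Z Y * G (act Z s) / L = (\<Sum>W\<in>C. (if W = act Z s then beta Z Y else 0) / L * G W)"
      proof -
        have "(\<Sum>W\<in>C. (if W = act Z s then beta Z Y else 0) / L * G W) = (\<Sum>W\<in>C. if W = act Z s then beta Z Y / L * G W else 0)"
          by (intro sum.cong refl) simp
        also have "\<dots> = beta Z Y / L * G (act Z s)" using fC \<open>act Z s \<in> C\<close> by (simp add: sum.delta)
        finally show ?thesis by simp
      qed
    qed
    also have "\<dots> = (\<Sum>W\<in>C. (\<Sum>Z\<in>C. \<Sum>s\<in>P. if W = act Z s then beta Z Y else 0) / L * G W)"
    proof -
      have "(\<Sum>Z\<in>C. \<Sum>s\<in>P. \<Sum>W\<in>C. (if W = act Z s then beta Z Y else 0) / L * G W)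
          = (\<Sum>Z\<in>C. \<Sum>W\<in>C. \<Sum>s\<in>P. (if W = act Z s then beta Z Y else 0) / L * G W)"
        by (rule sum.cong[OF refl]) (rule sum.swap)
      also have "\<dots> = (\<Sum>W\<in>C. \<Sum>Z\<in>C. \<Sum>s\<in>P. (if W = act Z s then beta Z Y else 0) / L * G W)"
        by (rule sum.swap)
      also have "\<dots> = (\<Sum>W\<in>C. (\<Sum>Z\<in>C. \<Sum>s\<in>P. if W = act Z s then beta Z Y else 0) / L * G W)"
        by (simp add: sum_distrib_right sum_divide_distrib)
      finally show ?thesis .
    qed
    finally have "w Y = (\<Sum>W\<in>C. (beta Y W + (\<Sum>Z\<in>C. \<Sum>s\<in>P. if W = act Z s then beta Z Y else 0) / L) * G W)"
      by (simp add: w_def sum.distrib distrib_right)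
    then show "w Y / L * (G Y - G (act Y p)) = (\<Sum>W\<in>C. ((beta Y W + (\<Sum>Z\<in>C. \<Sum>s\<in>P. if W = act Z s then beta Z Y else 0) / L) / L) * G W) * (G Y - G (act Y p))"
      by (simp add: sum_divide_distrib field_simps)
  qed
  finally show ?thesis by (simp add: L_def)
qed



lemma part1:
  assumes n: "0 < n" and il: "i \<le> l" and F: "perm_invariant n l F"
  shows "(\<Sum>X\<in>cube n i. (fpart n l F i X)^2) / of_nat (n ^ i) = eta n l F i / of_nat (l choose i)"
proof -
  let ?P = "{..<i} \<rightarrow>\<^sub>E {1..<n}"
  let ?A = "{T\<in>cube n l. wt l T = i}"
  define a where "a T = fourier n l F (pad l i T)" for T
  define S where "S = (\<Sum>T\<in>?P. a T * a (nui n i T))"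
  have fc: "finite (cube n l)" by (simp add: cube_def finite_PiE)
  have fP: "finite ?P" by (simp add: finite_PiE)
  have "(\<Sum>X\<in>cube n i. (fpart n l F i X)^2) = (\<Sum>X\<in>cube n i. (\<Sum>T\<in>?P. a T * chi n i T X)^2)"
    by (simp add: fpart_def a_def)
  also have "\<dots> = of_nat (n ^ i) * S"
    unfolding S_def
  proof (rule parseval[OF n fP])
    fix T assume "T \<in> ?P" then show "nui n i T \<in> ?P" by (rule nui_in)
  next
    fix T S assume "T \<in> ?P" "S \<in> ?P" then show "(\<forall>j<i. n dvd (T j + S j)) \<longleftrightarrow> S = nui n i T" by (rule nui_cond)
  qed
  finally have L: "(\<Sum>X\<in>cube n i. (fpart n l F i X)^2) / of_nat (n ^ i) = S" using n by simp
  have "(\<Sum>X\<in>cube n l. (level n l F i X)^2) = (\<Sum>X\<in>cube n l. (\<Sum>T\<in>?A. fourier n l F T * chi n l T X)^2)"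
    by (simp add: level_def)
  also have "\<dots> = of_nat (n ^ l) * (\<Sum>T\<in>?A. fourier n l F T * fourier n l F (nul n l T))"
    by (rule parseval[OF n]) (auto simp: fc nul_cube[OF n] wt_nul[OF n] nul_cond)
  also have "(\<Sum>T\<in>?A. fourier n l F T * fourier n l F (nul n l T))
      = of_nat (l choose i) * (\<Sum>T\<in>?P. fourier n l F (pad l i T) * fourier n l F (nul n l (pad l i T)))"
    by (rule comb[OF n il]) (simp add: fourier_comp[OF _ F] nul_comp)
  also have "(\<Sum>T\<in>?P. fourier n l F (pad l i T) * fourier n l F (nul n l (pad l i T))) = S"
    unfolding S_def a_def by (intro sum.cong refl) (simp add: pad_nui[OF _ il])
  finally have "eta n l F i = of_nat (l choose i) * S" using n by (simp add: eta_def)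
  moreover have "(l choose i) \<noteq> 0" using il by simp
  ultimately show ?thesis using L by simp
qed


definition pk :: "nat \<Rightarrow> nat \<Rightarrow> nat \<Rightarrow> (nat \<Rightarrow> nat) \<Rightarrow> (nat \<Rightarrow> nat) \<Rightarrow> complex" where
  "pk n l i Y X = (\<Sum>T\<in>{..<i} \<rightarrow>\<^sub>E {1..<n}. cnj (chi n l (pad l i T) Y) / of_nat (n ^ l) * chi n i T X)"

definition qk :: "nat \<Rightarrow> nat \<Rightarrow> nat \<Rightarrow> (nat \<Rightarrow> nat) \<Rightarrow> (nat \<Rightarrow> nat) \<Rightarrow> complex" where
  "qk n l i Y X = (\<Sum>T\<in>{T\<in>cube n l. wt l T = i}. cnj (chi n l T Y) / of_nat (n ^ l) * chi n l T X)"

definition beta :: "nat \<Rightarrow> nat \<Rightarrow> nat \<Rightarrow> (nat \<Rightarrow> nat) \<Rightarrow> (nat \<Rightarrow> nat) \<Rightarrow> complex" where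
  "beta n l i Y Z = (\<Sum>X\<in>cube n i. pk n l i Y X * pk n l i Z X) / of_nat (n ^ i)
      - (\<Sum>X\<in>cube n l. qk n l i Y X * qk n l i Z X) / of_nat (n ^ l) / of_nat (l choose i)"

lemma lin_rep:
  fixes c :: "'a \<Rightarrow> 'c::field"
  assumes "finite A" "finite B"
  shows "(\<Sum>T\<in>A. (\<Sum>Y\<in>B. c Y * d T Y) / N * e T) = (\<Sum>Y\<in>B. c Y * (\<Sum>T\<in>A. d T Y / N * e T))"
proof -
  have "(\<Sum>T\<in>A. (\<Sum>Y\<in>B. c Y * d T Y) / N * e T) = (\<Sum>T\<in>A. \<Sum>Y\<in>B. c Y * (d T Y / N * e T))"
  proof (rule sum.cong[OF refl])
    fix T assume "T \<in> A"
    have "(\<Sum>Y\<in>B. c Y * d T Y) / N * e T = (\<Sum>Y\<in>B. c Y * d T Y / N * e T)"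
      by (simp only: sum_divide_distrib sum_distrib_right)
    also have "\<dots> = (\<Sum>Y\<in>B. c Y * (d T Y / N * e T))"
      by (intro sum.cong refl) (simp add: mult.assoc)
    finally show "(\<Sum>Y\<in>B. c Y * d T Y) / N * e T = (\<Sum>Y\<in>B. c Y * (d T Y / N * e T))" .
  qed
  also have "\<dots> = (\<Sum>Y\<in>B. \<Sum>T\<in>A. c Y * (d T Y / N * e T))" by (rule sum.swap)
  also have "\<dots> = (\<Sum>Y\<in>B. c Y * (\<Sum>T\<in>A. d T Y / N * e T))" by (simp add: sum_distrib_left)
  finally show ?thesis .
qed

lemma fc: "finite (cube n l)" by (simp add: cube_def finite_PiE)

lemma fpart_rep: "fpart n l G i X = (\<Sum>Y\<in>cube n l. complex_of_real (G Y) * pk n l i Y X)"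
  unfolding fpart_def fourier_def pk_def by (rule lin_rep) (auto simp: fc finite_PiE)

lemma level_rep: "level n l G i X = (\<Sum>Y\<in>cube n l. complex_of_real (G Y) * qk n l i Y X)"
  unfolding level_def fourier_def qk_def by (rule lin_rep) (auto simp: fc)

lemma disc_rep:
  "discrepancy n l G i = (\<Sum>Y\<in>cube n l. \<Sum>Z\<in>cube n l. beta n l i Y Z * complex_of_real (G Y) * complex_of_real (G Z))"
proof -
  let ?c = "\<lambda>Y. complex_of_real (G Y)"
  have s1: "(\<Sum>X\<in>cube n i. (fpart n l G i X)^2) = (\<Sum>Y\<in>cube n l. \<Sum>Z\<in>cube n l. ?c Y * ?c Z * (\<Sum>X\<in>cube n i. pk n l i Y X * pk n l i Z X))"
    unfolding fpart_rep by (rule square_sum_expand) (auto simp: fc)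
  have s2: "(\<Sum>X\<in>cube n l. (level n l G i X)^2) = (\<Sum>Y\<in>cube n l. \<Sum>Z\<in>cube n l. ?c Y * ?c Z * (\<Sum>X\<in>cube n l. qk n l i Y X * qk n l i Z X))"
    unfolding level_rep by (rule square_sum_expand) (auto simp: fc)
  have "discrepancy n l G i = (\<Sum>Y\<in>cube n l. \<Sum>Z\<in>cube n l. ?c Y * ?c Z * (\<Sum>X\<in>cube n i. pk n l i Y X * pk n l i Z X)) / of_nat (n ^ i)
     - (\<Sum>Y\<in>cube n l. \<Sum>Z\<in>cube n l. ?c Y * ?c Z * (\<Sum>X\<in>cube n l. qk n l i Y X * qk n l i Z X)) / of_nat (n ^ l) / of_nat (l choose i)"
    unfolding discrepancy_def eta_def s1 s2 ..
  also have "\<dots> = (\<Sum>Y\<in>cube n l. \<Sum>Z\<in>cube n l. ?c Y * ?c Z * (\<Sum>X\<in>cube n i. pk n l i Y X * pk n l i Z X) / of_nat (n ^ i)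
     - ?c Y * ?c Z * (\<Sum>X\<in>cube n l. qk n l i Y X * qk n l i Z X) / of_nat (n ^ l) / of_nat (l choose i))"
    by (simp add: sum_divide_distrib sum_subtractf)
  also have "\<dots> = (\<Sum>Y\<in>cube n l. \<Sum>Z\<in>cube n l. beta n l i Y Z * ?c Y * ?c Z)"
    by (intro sum.cong refl) (simp add: beta_def algebra_simps)
  finally show ?thesis .
qed

lemma disc_real:
  assumes n: "0 < n" and il: "i \<le> l"
  shows "cnj (discrepancy n l G i) = discrepancy n l G i"
  by (simp add: discrepancy_def eta_def fpart_real[OF n il] level_real[OF n])

theorem lemmaC11:
  fixes n l i :: nat and F :: "(nat \<Rightarrow> nat) \<Rightarrow> real"
  assumes "0 < n" and "1 \<le> i" and "i \<le> l"
  shows "(perm_invariant n l F \<longrightarrow>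
           (\<Sum>X\<in>cube n i. (fpart n l F i X)^2) / of_nat (n ^ i)
             = eta n l F i / of_nat (l choose i))
       \<and> (\<exists>(c :: (nat \<Rightarrow> nat) \<Rightarrow> (nat \<Rightarrow> nat) \<Rightarrow> real)
            (a :: (nat \<Rightarrow> nat) \<Rightarrow> (nat \<Rightarrow> nat) \<Rightarrow> (nat \<Rightarrow> nat) \<Rightarrow> real).
          \<forall>G :: (nat \<Rightarrow> nat) \<Rightarrow> real.
            discrepancy n l G i =
              complex_of_real (\<Sum>x\<in>cube n l. \<Sum>\<pi>\<in>{\<pi>. \<pi> permutes {..<l}}.
                 (c x \<pi> + (\<Sum>y\<in>cube n l. a x \<pi> y * G y)) * (G x - G (x \<circ> \<pi>))))"
proof -
  have n: "0 < n" and il: "i \<le> l" using assms by auto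
  define Pm where "Pm = {\<pi>. \<pi> permutes {..<l}}"
  define L where "L = card Pm"
  have fPm: "finite Pm" unfolding Pm_def by (rule finite_permutations) simp
  have Pmne: "Pm \<noteq> {}" unfolding Pm_def using permutes_id by blast
  have L0: "0 < L" unfolding L_def using fPm Pmne by (simp add: card_gt_0_iff)
  define a' where "a' Y W = (beta n l i Y W + (\<Sum>Z\<in>cube n l. \<Sum>s\<in>Pm. if W = Z \<circ> s then beta n l i Z Y else 0) / of_nat L) / of_nat L" for Y W
  have key: "discrepancy n l G i = complex_of_real (\<Sum>x\<in>cube n l. \<Sum>\<pi>\<in>Pm. (\<Sum>y\<in>cube n l. Re (a' x y) * G y) * (G x - G (x \<circ> \<pi>)))"
    for G :: "(nat \<Rightarrow> nat) \<Rightarrow> real"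
  proof -
    define Hr where "Hr Y = (\<Sum>\<pi>\<in>Pm. G (Y \<circ> \<pi>)) / real L" for Y
    have Hinv: "perm_invariant n l Hr"
      unfolding perm_invariant_def
    proof (intro ballI allI impI)
      fix x :: "nat \<Rightarrow> nat" and s assume s: "s permutes {..<l}"
      have "(\<Sum>\<pi>\<in>Pm. G (x \<circ> \<pi>)) = (\<Sum>\<pi>\<in>Pm. G (x \<circ> (s \<circ> \<pi>)))"
        unfolding Pm_def by (rule setum_permutations_compose_left[OF s])
      then show "Hr x = Hr (x \<circ> s)" by (simp add: Hr_def o_assoc)
    qed
    have D0: "discrepancy n l Hr i = 0"
      using part1[OF n il Hinv] by (simp add: discrepancy_def)
    have Hc: "complex_of_real (Hr Y) = (\<Sum>\<pi>\<in>Pm. complex_of_real (G (Y \<circ> \<pi>))) / of_nat (card Pm)" for Y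
      by (simp add: Hr_def L_def)
    have Q0: "(\<Sum>Y\<in>cube n l. \<Sum>Z\<in>cube n l. beta n l i Y Z * ((\<Sum>\<pi>\<in>Pm. complex_of_real (G (Y \<circ> \<pi>))) / of_nat (card Pm))
         * ((\<Sum>\<pi>\<in>Pm. complex_of_real (G (Z \<circ> \<pi>))) / of_nat (card Pm))) = 0"
      using D0 unfolding disc_rep Hc .
    have dec: "discrepancy n l G i = (\<Sum>Y\<in>cube n l. \<Sum>p\<in>Pm. (\<Sum>W\<in>cube n l. a' Y W * complex_of_real (G W))
          * (complex_of_real (G Y) - complex_of_real (G (Y \<circ> p))))"
      unfolding disc_rep a'_def L_def
    proof (rule quad_decomp[OF fc fPm Pmne _ refl Q0])
      fix Y p assume "Y \<in> cube n l" "p \<in> Pm"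
      then show "Y \<circ> p \<in> cube n l" using cube_comp unfolding Pm_def by blast
    qed
    have "discrepancy n l G i \<in> \<real>" using disc_real[OF n il] by (simp add: Reals_cnj_iff)
    then have "discrepancy n l G i = complex_of_real (Re (discrepancy n l G i))"
      by (simp add: complex_is_Real_iff complex_eq_iff)
    also have "Re (discrepancy n l G i) = (\<Sum>x\<in>cube n l. \<Sum>\<pi>\<in>Pm. (\<Sum>y\<in>cube n l. Re (a' x y) * G y) * (G x - G (x \<circ> \<pi>)))"
      unfolding dec by (simp add: of_real_diff[symmetric] sum_distrib_right del: of_real_diff)
    finally show ?thesis .
  qed
  show ?thesis
  proof (intro conjI impI)
    assume F: "perm_invariant n l F"
    show "(\<Sum>X\<in>cube n i. (fpart n l F i X)^2) / of_nat (n ^ i) = eta n l F i / of_nat (l choose i)"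
      by (rule part1[OF n il F])
  next
    show "\<exists>(c :: (nat \<Rightarrow> nat) \<Rightarrow> (nat \<Rightarrow> nat) \<Rightarrow> real)
            (a :: (nat \<Rightarrow> nat) \<Rightarrow> (nat \<Rightarrow> nat) \<Rightarrow> (nat \<Rightarrow> nat) \<Rightarrow> real).
          \<forall>G :: (nat \<Rightarrow> nat) \<Rightarrow> real.
            discrepancy n l G i =
              complex_of_real (\<Sum>x\<in>cube n l. \<Sum>\<pi>\<in>{\<pi>. \<pi> permutes {..<l}}.
                 (c x \<pi> + (\<Sum>y\<in>cube n l. a x \<pi> y * G y)) * (G x - G (x \<circ> \<pi>)))"
      by (intro exI[where x="\<lambda>_ _. 0"] exI[where x="\<lambda>x _ y. Re (a' x y)"] allI) (simp add: key Pm_def)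
  qed
qed

end
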